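(* In a public goods economy (as in the context), let $\mathbf{a}$ be an outcome, let $K$ be a path connected component of $\mathbf{D}_{\mathbf{a}}=\{\mathbf{a}'\in[0,1]^n:\mathbf{u}(\mathbf{a})\ge\mathbf{u}(\mathbf{a}')\}$, and let $\mathbf{x}\in K$ lie on the lower envelope of $K$, i.e. there is no $\mathbf{x}'\in K$ with $\mathbf{x}'\lneq\mathbf{x}$. Then for some (possibly empty) set of agents $C\subseteq N$ we have $\mathbf{u}_C(\mathbf{x})=\mathbf{u}_C(\mathbf{a})$ and $\mathbf{x}_{N\setminus C}=\mathbf{0}_{N\setminus C}$.
   Context: Agents $N=\{1,\dots,n\}$; outcomes are vectors in $[0,1]^n$. Vector orderings: $\mathbf{x}\ge\mathbf{y}$ coordinatewise; $\mathbf{x}>\mathbf{y}$ strict in every coordinate; $\mathbf{x}\gneq\mathbf{y}$ means $\mathbf{x}\ge\mathbf{y}$ and $x_j>y_j$ for some $j$ ($\mathbf{x}\lneq\mathbf{y}$ means $\mathbf{y}\gneq\mathbf{x}$). For $C\subseteq N$, $\mathbf{v}_C$ is the restriction of $\mathbf{v}$ to coordinates in $C$. The utility function $\mathbf{u}:[0,1]^n\to[0,1]^n$ is continuous, concave, and has positive externalities: whenever $\mathbf{a}\gneq\mathbf{a}'$ and $a_i=a'_i$, then $u_i(\mathbf{a})>u_i(\mathbf{a}')$. *)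

theory Defs
  imports "HOL-Analysis.Analysis"
begin

text \<open>Outcomes: vectors in [0,1]^n, agents indexed by the finite type 'n.\<close>
definition unit_cube :: "(real ^ 'n) set" where
  "unit_cube = {x. \<forall>i. 0 \<le> x $ i \<and> x $ i \<le> 1}"

text \<open>Public goods economy: u maps [0,1]^n to [0,1]^n, continuous, concave
  (each coordinate concave), with positive externalities.\<close>
definition public_goods_utility :: "(real ^ 'n \<Rightarrow> real ^ 'n) \<Rightarrow> bool" where
  "public_goods_utility u \<longleftrightarrow>
     (\<forall>x \<in> unit_cube. u x \<in> unit_cube) \<and>
     continuous_on unit_cube u \<and>
     (\<forall>i. concave_on unit_cube (\<lambda>x. u x $ i)) \<and>
     (\<forall>a \<in> unit_cube. \<forall>a' \<in> unit_cube. \<forall>i.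
        ((\<forall>j. a' $ j \<le> a $ j) \<and> (\<exists>j. a' $ j < a $ j) \<and> a $ i = a' $ i)
          \<longrightarrow> u a $ i > u a' $ i)"

definition lower_set :: "(real ^ 'n \<Rightarrow> real ^ 'n) \<Rightarrow> real ^ 'n \<Rightarrow> (real ^ 'n) set" where
  "lower_set u a = {a' \<in> unit_cube. \<forall>i. u a' $ i \<le> u a $ i}"

end

theory Submission
  imports Defs
begin

theorem claim6:
  fixes u :: "real ^ 'n \<Rightarrow> real ^ 'n" and a x :: "real ^ 'n" and K :: "(real ^ 'n) set"
  assumes econ: "public_goods_utility u"
    and a_out: "a \<in> unit_cube"
    and K_comp: "\<exists>y \<in> lower_set u a. K = path_component_set (lower_set u a) y"
    and xK: "x \<in> K"
    and lower: "\<not> (\<exists>x' \<in> K. (\<forall>j. x' $ j \<le> x $ j) \<and> (\<exists>j. x' $ j < x $ j))"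
  shows "\<exists>C :: 'n set. (\<forall>i \<in> C. u x $ i = u a $ i) \<and> (\<forall>i. i \<notin> C \<longrightarrow> x $ i = 0)"
proof (intro exI[of _ "{i. u x $ i = u a $ i}"] conjI ballI allI impI)
  fix i assume "i \<in> {i. u x $ i = u a $ i}" thus "u x $ i = u a $ i" by simp
next
  fix i assume ni: "i \<notin> {i. u x $ i = u a $ i}"
  obtain y where y: "y \<in> lower_set u a" and Kd: "K = path_component_set (lower_set u a) y"
    using K_comp by blast
  have pyx: "path_component (lower_set u a) y x" using xK Kd by simp
  have xL: "x \<in> lower_set u a" using pyx path_component_mem(2) by blast
  hence xc: "x \<in> unit_cube" and xle: "\<And>j. u x $ j \<le> u a $ j" by (auto simp: lower_set_def)
  have lt: "u x $ i < u a $ i" using ni xle[of i] by auto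
  have cont: "continuous_on unit_cube u" and ext: "\<And>p q k. p \<in> unit_cube \<Longrightarrow> q \<in> unit_cube \<Longrightarrow>
        (\<forall>j. q $ j \<le> p $ j) \<Longrightarrow> (\<exists>j. q $ j < p $ j) \<Longrightarrow> p $ k = q $ k \<Longrightarrow> u p $ k > u q $ k"
    using econ unfolding public_goods_utility_def by blast+
  show "x $ i = 0"
  proof (rule ccontr)
    assume "x $ i \<noteq> 0"
    moreover have "x $ i \<ge> 0" using xc unfolding unit_cube_def by blast
    ultimately have xi: "x $ i > 0" by linarith
    have "\<forall>e>0. \<exists>d>0. \<forall>z\<in>unit_cube. dist z x < d \<longrightarrow> dist (u z) (u x) < e"
      using cont xc unfolding continuous_on_iff by blast
    moreover have "u a $ i - u x $ i > 0" using lt by simp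
    ultimately obtain d where d: "d > 0" and dd0: "\<forall>z\<in>unit_cube. dist z x < d \<longrightarrow> dist (u z) (u x) < u a $ i - u x $ i"
      by blast
    have dd: "\<And>z. z \<in> unit_cube \<Longrightarrow> dist z x < d \<Longrightarrow> dist (u z) (u x) < u a $ i - u x $ i"
      using dd0 by blast
    define \<delta> where "\<delta> = min (x $ i) (d/2)"
    have \<delta>: "\<delta> > 0" "\<delta> \<le> x $ i" "\<delta> < d" using d xi by (auto simp: \<delta>_def)
    define x' where "x' = x - \<delta> *\<^sub>R axis i 1"
    have x'c: "\<And>j. x' $ j = (if j = i then x $ i - \<delta> else x $ j)"
      by (simp add: x'_def axis_def)
    have dxx': "dist x x' = \<delta>" using \<delta> by (simp add: x'_def dist_norm)
    have seg: "closed_segment x x' \<subseteq> lower_set u a"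
    proof
      fix z assume zs: "z \<in> closed_segment x x'"
      then obtain t where t: "0 \<le> t" "t \<le> 1" and zd: "z = (1 - t) *\<^sub>R x + t *\<^sub>R x'"
        unfolding closed_segment_def by blast
      have zc: "\<And>j. z $ j = (if j = i then x $ i - t * \<delta> else x $ j)"
      proof -
        fix j
        have "z $ j = (1 - t) * x $ j + t * x' $ j" using zd by simp
        thus "z $ j = (if j = i then x $ i - t * \<delta> else x $ j)"
          using x'c[of j] by (auto simp: algebra_simps)
      qed
      have tdle: "t * \<delta> \<le> \<delta>" using t \<delta> by (simp add: mult_left_le_one_le)
      have tdge: "t * \<delta> \<ge> 0" using t \<delta> by simp
      have zcube: "z \<in> unit_cube" unfolding unit_cube_def
      proof (intro CollectI allI)
        fix j
        have "0 \<le> x $ j \<and> x $ j \<le> 1" using xc unfolding unit_cube_def by blast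
        thus "0 \<le> z $ j \<and> z $ j \<le> 1" using zc[of j] tdle tdge \<delta>(2) by (cases "j = i") auto
      qed
      have dz: "dist z x < d" using dist_in_closed_segment[OF zs] dxx' \<delta> by linarith
      have ui: "u z $ i \<le> u a $ i"
      proof -
        have "dist (u z $ i) (u x $ i) \<le> dist (u z) (u x)" by (rule dist_vec_nth_le)
        thus ?thesis using dd[OF zcube dz] by (simp add: dist_real_def; linarith)
      qed
      show "z \<in> lower_set u a"
      proof (cases "t = 0")
        case True thus ?thesis using zd xL by simp
      next
        case False
        hence tp: "t * \<delta> > 0" using t \<delta> by simp
        have "u z $ j \<le> u a $ j" for j
        proof (cases "j = i")
          case True thus ?thesis using ui by simp
        next
          case False
          have "u x $ j > u z $ j"
            apply (rule ext[OF xc zcube])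
            using zc tp False by auto
          thus ?thesis using xle[of j] by linarith
        qed
        thus ?thesis using zcube by (simp add: lower_set_def)
      qed
    qed
    have "path_component (lower_set u a) y x'"
      using path_component_trans[OF pyx path_component_linepath[OF seg]] .
    hence "x' \<in> K" using Kd by simp
    moreover have "\<forall>j. x' $ j \<le> x $ j" "x' $ i < x $ i" using x'c \<delta> by auto
    ultimately show False using lower by blast
  qed
qed

end
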